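(* Let $\Gamma$ be a metrized graph, and for each edge $e_i\in E(\Gamma)$ let $p_i,q_i$ be its end points. For any $p \in V(\Gamma)$, $$\sum_{e_i \in E(\Gamma)}\frac{L_i(R_{a_i,p}-R_{b_i,p})^2}{(L_i+R_i)^2} =\sum_{e_i \in E(\Gamma)}\frac{L_i}{L_i + R_i}\big(r(p_i,p)+r(q_i,p)\big) - \sum_{q \in V(\Gamma)}(\mathrm{val}(q)-2)\,r(p,q) = 2\sum_{q \in V(\Gamma)}r(p,q) -\sum_{e_i \in E(\Gamma)}\frac{R_i}{L_i + R_i} \big(r(p_i,p)+r(q_i,p)\big).$$
   Context: A metrized graph $\Gamma$ is a finite connected graph (multiple edges and self-loops allowed) each of whose edges is identified with a closed segment of positive length, with a finite nonempty vertex set $V(\Gamma)$ containing every point of valence $\neq2$; $\mathrm{val}(q)$ is the valence of $q$ (number of directions emanating from $q$); $L_i$ is the length of $e_i$; $r$ is the effective resistance (edges as resistors of resistance equal to length). For an edge $e_i$: if $\Gamma-e_i$ (interior deleted) is connected, $R_i$ is the effective resistance between $p_i,q_i$ in $\Gamma-e_i$, $R_{a_i,p}=\hat j_{p_i}(p,q_i)$, $R_{b_i,p}=\hat j_{q_i}(p,p_i)$ with $\hat j_z(x,y)$ the voltage function of $\Gamma-e_i$ (potential at $x$ when unit current enters at $y$ and exits at $z$, potential $0$ at $z$); if $e_i$ is a bridge, $R_{a_i,p}=0,R_{b_i,p}=R_i$ for $p$ in the component of $\Gamma-e_i$ containing $p_i$ and $R_{a_i,p}=R_i,R_{b_i,p}=0$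 otherwise, with every expression in $R_i$ interpreted as its limit as $R_i\to\infty$; for a self-loop $R_i=0$. *)

theory Defs
  imports Complex_Main
begin

text \<open>A metrized graph is modelled by its (finite) vertex set V, a finite set E of edge
  labels, endpoint maps ep, eq (edge i has endpoints ep i, eq i; multiple edges and
  self-loops allowed) and edge lengths L. Effective resistances between vertices of a
  metrized graph coincide with those of the discrete electrical network on V with
  resistances L i.\<close>

definition metrized_graph ::
  "'v set \<Rightarrow> 'e set \<Rightarrow> ('e \<Rightarrow> 'v) \<Rightarrow> ('e \<Rightarrow> 'v) \<Rightarrow> ('e \<Rightarrow> real) \<Rightarrow> bool" where
  "metrized_graph V E ep eq L \<longleftrightarrow> finite V \<and> V \<noteq> {} \<and> finite E \<and>
     (\<forall>i\<in>E. ep i \<in> V \<and> eq i \<in> V \<and> L i > 0)"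

definition adj :: "'e set \<Rightarrow> ('e \<Rightarrow> 'v) \<Rightarrow> ('e \<Rightarrow> 'v) \<Rightarrow> ('v \<times> 'v) set" where
  "adj E ep eq = {(ep i, eq i) | i. i \<in> E} \<union> {(eq i, ep i) | i. i \<in> E}"

definition connected_graph :: "'v set \<Rightarrow> 'e set \<Rightarrow> ('e \<Rightarrow> 'v) \<Rightarrow> ('e \<Rightarrow> 'v) \<Rightarrow> bool" where
  "connected_graph V E ep eq \<longleftrightarrow> (\<forall>x\<in>V. \<forall>y\<in>V. (x, y) \<in> (adj E ep eq)\<^sup>*)"

text \<open>Valence of a vertex: number of edge-ends at it (a self-loop counts twice).\<close>
definition val :: "'e set \<Rightarrow> ('e \<Rightarrow> 'v) \<Rightarrow> ('e \<Rightarrow> 'v) \<Rightarrow> 'v \<Rightarrow> nat" where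
  "val E ep eq x = card {i \<in> E. ep i = x} + card {i \<in> E. eq i = x}"

text \<open>Network Laplacian (net current flowing out of u for potential f).\<close>
definition lap :: "'e set \<Rightarrow> ('e \<Rightarrow> 'v) \<Rightarrow> ('e \<Rightarrow> 'v) \<Rightarrow> ('e \<Rightarrow> real) \<Rightarrow> ('v \<Rightarrow> real) \<Rightarrow> 'v \<Rightarrow> real" where
  "lap E ep eq L f u =
     (\<Sum>i\<in>{i \<in> E. ep i = u}. (f u - f (eq i)) / L i) +
     (\<Sum>i\<in>{i \<in> E. eq i = u}. (f u - f (ep i)) / L i)"

text \<open>Voltage function j_z(x,y): potential at x when unit current enters at y and exits
  at z, with potential 0 at z.\<close>
definition jvolt :: "'v set \<Rightarrow> 'e set \<Rightarrow> ('e \<Rightarrow> 'v) \<Rightarrow> ('e \<Rightarrow> 'v) \<Rightarrow> ('e \<Rightarrow> real)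
    \<Rightarrow> 'v \<Rightarrow> 'v \<Rightarrow> 'v \<Rightarrow> real" where
  "jvolt V E ep eq L z x y =
     (THE f. f z = 0 \<and>
        (\<forall>u\<in>V. lap E ep eq L f u = (if u = y then 1 else 0) - (if u = z then 1 else 0)) \<and>
        (\<forall>u. u \<notin> V \<longrightarrow> f u = 0)) x"

definition eff_res :: "'v set \<Rightarrow> 'e set \<Rightarrow> ('e \<Rightarrow> 'v) \<Rightarrow> ('e \<Rightarrow> 'v) \<Rightarrow> ('e \<Rightarrow> real)
    \<Rightarrow> 'v \<Rightarrow> 'v \<Rightarrow> real" where
  "eff_res V E ep eq L x y = jvolt V E ep eq L y x x"

definition is_bridge :: "'v set \<Rightarrow> 'e set \<Rightarrow> ('e \<Rightarrow> 'v) \<Rightarrow> ('e \<Rightarrow> 'v) \<Rightarrow> 'e \<Rightarrow> bool" where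
  "is_bridge V E ep eq i \<longleftrightarrow> \<not> connected_graph V (E - {i}) ep eq"

definition R_del where
  "R_del V E ep eq L i = eff_res V (E - {i}) ep eq L (ep i) (eq i)"
definition R_a where
  "R_a V E ep eq L i p = jvolt V (E - {i}) ep eq L (ep i) p (eq i)"
definition R_b where
  "R_b V E ep eq L i p = jvolt V (E - {i}) ep eq L (eq i) p (ep i)"

text \<open>For a bridge: R_a = 0, R_b = R_i if p lies in the component of Gamma - e_i containing
  p_i, and R_a = R_i, R_b = 0 otherwise; expressions are taken as limits R_i \<rightarrow> \<infinity>.\<close>
definition edge_expr ::
  "'v set \<Rightarrow> 'e set \<Rightarrow> ('e \<Rightarrow> 'v) \<Rightarrow> ('e \<Rightarrow> 'v) \<Rightarrow> ('e \<Rightarrow> real) \<Rightarrow> 'e \<Rightarrow> 'v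
     \<Rightarrow> (real \<Rightarrow> real \<Rightarrow> real \<Rightarrow> real \<Rightarrow> real) \<Rightarrow> real" where
  "edge_expr V E ep eq L i p F =
     (if is_bridge V E ep eq i then
        (if (ep i, p) \<in> (adj (E - {i}) ep eq)\<^sup>*
         then Lim at_top (\<lambda>t. F (L i) t 0 t)
         else Lim at_top (\<lambda>t. F (L i) t t 0))
      else F (L i) (R_del V E ep eq L i) (R_a V E ep eq L i p) (R_b V E ep eq L i p))"

end

theory Submission
  imports Defs "Jordan_Normal_Form.Determinant"
begin


lemma lin_exist:
  fixes W :: "'a set" and M :: "'a \<Rightarrow> 'a \<Rightarrow> real" and s :: "'a \<Rightarrow> real"
  assumes fin: "finite W"
    and inj: "\<And>f. \<forall>u\<in>W. (\<Sum>w\<in>W. M u w * f w) = 0 \<Longrightarrow> \<forall>w\<in>W. f w = 0"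
  shows "\<exists>f. \<forall>u\<in>W. (\<Sum>w\<in>W. M u w * f w) = s u"
proof -
  define n where "n = card W"
  obtain e where bij: "bij_betw e {0..<n} W"
    using ex_bij_betw_nat_finite[OF fin] unfolding n_def by (elim exE)
  define ie where "ie = inv_into {0..<n} e"
  have ie1: "\<And>w. w \<in> W \<Longrightarrow> ie w < n \<and> e (ie w) = w"
  proof -
    fix w assume w: "w \<in> W"
    have "ie w \<in> {0..<n}" unfolding ie_def using bij_betwE[OF bij_betw_inv_into[OF bij]] w by blast
    moreover have "e (ie w) = w" unfolding ie_def using bij_betw_inv_into_right[OF bij w] .
    ultimately show "ie w < n \<and> e (ie w) = w" by simp
  qed
  have ie2: "\<And>j. j < n \<Longrightarrow> ie (e j) = j"
    using bij unfolding ie_def by (simp add: bij_betw_inv_into_left)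
  define A where "A = mat n n (\<lambda>(i,j). M (e i) (e j))"
  have A: "A \<in> carrier_mat n n" unfolding A_def by simp
  have key: "\<And>v i. v \<in> carrier_vec n \<Longrightarrow> i < n \<Longrightarrow>
     (A *\<^sub>v v) $ i = (\<Sum>w\<in>W. M (e i) w * v $ (ie w))"
  proof -
    fix v :: "real vec" and i assume v: "v \<in> carrier_vec n" and i: "i < n"
    have "(A *\<^sub>v v) $ i = (\<Sum>j\<in>{0..<n}. M (e i) (e j) * v $ j)"
      using v i A unfolding A_def by (simp add: scalar_prod_def)
    also have "\<dots> = (\<Sum>j\<in>{0..<n}. M (e i) (e j) * v $ (ie (e j)))"
      by (rule sum.cong) (auto simp: ie2)
    also have "\<dots> = (\<Sum>w\<in>W. M (e i) w * v $ (ie w))"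
      using sum.reindex_bij_betw[OF bij, of "\<lambda>w. M (e i) w * v $ (ie w)"] by simp
    finally show "(A *\<^sub>v v) $ i = (\<Sum>w\<in>W. M (e i) w * v $ (ie w))" .
  qed
  have detA: "det A \<noteq> 0"
  proof
    assume "det A = 0"
    then obtain v where v: "v \<in> carrier_vec n" "v \<noteq> 0\<^sub>v n" "A *\<^sub>v v = 0\<^sub>v n"
      using det_0_iff_vec_prod_zero_field[OF A] by blast
    have "\<forall>u\<in>W. (\<Sum>w\<in>W. M u w * v $ (ie w)) = 0"
    proof
      fix u assume u: "u \<in> W"
      have "(\<Sum>w\<in>W. M u w * v $ (ie w)) = (A *\<^sub>v v) $ ie u"
        using key[OF v(1), of "ie u"] ie1[OF u] by simp
      also have "\<dots> = 0" using v(3) ie1[OF u] by simp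
      finally show "(\<Sum>w\<in>W. M u w * v $ (ie w)) = 0" .
    qed
    from inj[OF this] have "\<forall>w\<in>W. v $ (ie w) = 0" .
    hence z: "\<And>i. i < n \<Longrightarrow> v $ i = 0"
      using bij ie2 by (metis atLeastLessThan_iff bij_betwE zero_le)
    have "v = 0\<^sub>v n"
      using v(1) z by (intro eq_vecI) auto
    with v(2) show False by simp
  qed
  define b where "b = vec n (\<lambda>i. s (e i))"
  define x where "x = (1 / det A) \<cdot>\<^sub>v (adj_mat A *\<^sub>v b)"
  have b: "b \<in> carrier_vec n" unfolding b_def by simp
  have adj: "adj_mat A \<in> carrier_mat n n" "A * adj_mat A = det A \<cdot>\<^sub>m 1\<^sub>m n"
    using adj_mat[OF A] by auto
  have x: "x \<in> carrier_vec n" unfolding x_def using adj b by simp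
  have "A *\<^sub>v x = (1 / det A) \<cdot>\<^sub>v (A *\<^sub>v (adj_mat A *\<^sub>v b))"
    unfolding x_def using A adj b by (simp add: mult_mat_vec)
  also have "\<dots> = (1 / det A) \<cdot>\<^sub>v ((A * adj_mat A) *\<^sub>v b)"
    using assoc_mult_mat_vec[OF A adj(1) b] by simp
  also have "\<dots> = b" unfolding adj(2) using detA b
  proof (intro eq_vecI)
    fix i assume i: "i < dim_vec b"
    have "(\<Sum>ia = 0..<n. det A * (if ia = i then 1 else 0) * b $ ia)
       = (\<Sum>ia = 0..<n. if ia = i then det A * b $ ia else 0)"
      by (rule sum.cong) auto
    also have "\<dots> = det A * b $ i" using i b by simp
    finally show "(1 / det A \<cdot>\<^sub>v (det A \<cdot>\<^sub>m 1\<^sub>m n *\<^sub>v b)) $ i = b $ i"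
      using i b detA by (simp add: scalar_prod_def)
  qed (use b in simp)
  finally have Ax: "A *\<^sub>v x = b" .
  show ?thesis
  proof (intro exI ballI)
    fix u assume u: "u \<in> W"
    have "(\<Sum>w\<in>W. M u w * x $ (ie w)) = (A *\<^sub>v x) $ ie u"
      using key[OF x, of "ie u"] ie1[OF u] by simp
    also have "\<dots> = s u" using Ax ie1[OF u] unfolding b_def by simp
    finally show "(\<Sum>w\<in>W. M u w * x $ (ie w)) = s u" .
  qed
qed


definition wfg :: "'v set \<Rightarrow> 'e set \<Rightarrow> ('e \<Rightarrow> 'v) \<Rightarrow> ('e \<Rightarrow> 'v) \<Rightarrow> ('e \<Rightarrow> real) \<Rightarrow> bool" where
  "wfg V E ep eb L \<longleftrightarrow> finite V \<and> finite E \<and> (\<forall>i\<in>E. ep i \<in> V \<and> eb i \<in> V \<and> L i > 0)"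

lemma group_ep:
  assumes "finite V" "finite E" "\<forall>i\<in>E. f i \<in> V"
  shows "(\<Sum>u\<in>V. \<Sum>i\<in>{i \<in> E. f i = u}. G u i) = (\<Sum>i\<in>E. G (f i) i)"
proof -
  have "(\<Sum>u\<in>V. \<Sum>i\<in>{i \<in> E. f i = u}. G u i) = (\<Sum>u\<in>V. \<Sum>i\<in>{i \<in> E. f i = u}. G (f i) i)"
    by (intro sum.cong refl) auto
  also have "\<dots> = (\<Sum>i\<in>E. G (f i) i)"
    using sum.group[of E V f "\<lambda>i. G (f i) i"] assms by auto
  finally show ?thesis .
qed

lemma diag_group:
  assumes "wfg V E ep eb L"
  shows "(\<Sum>u\<in>V. lap E ep eb L (H u) u)
     = (\<Sum>i\<in>E. (H (ep i) (ep i) - H (ep i) (eb i)) / L i)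
     + (\<Sum>i\<in>E. (H (eb i) (eb i) - H (eb i) (ep i)) / L i)"
  using assms unfolding lap_def wfg_def
  by (simp add: sum.distrib group_ep[of V E ep] group_ep[of V E eb])

lemma green:
  assumes "wfg V E ep eb L"
  shows "(\<Sum>u\<in>V. g u * lap E ep eb L f u)
     = (\<Sum>i\<in>E. (g (ep i) - g (eb i)) * (f (ep i) - f (eb i)) / L i)"
proof -
  have "(\<Sum>u\<in>V. g u * lap E ep eb L f u) = (\<Sum>u\<in>V. lap E ep eb L (\<lambda>x. g u * f x) u)"
    by (simp add: lap_def sum_distrib_left right_diff_distrib algebra_simps sum_divide_distrib)
  also have "\<dots> = (\<Sum>i\<in>E. (g (ep i) - g (eb i)) * (f (ep i) - f (eb i)) / L i)"
    using diag_group[OF assms, of "\<lambda>u x. g u * f x"]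
    by (simp add: sum.distrib[symmetric] diff_divide_distrib[symmetric] algebra_simps add_divide_distrib[symmetric])
  finally show ?thesis .
qed

lemma lap_diff: "lap E ep eb L (\<lambda>x. f x - g x) u = lap E ep eb L f u - lap E ep eb L g u"
proof -
  have a: "\<And>S h. (\<Sum>i\<in>S. (f u - g u - (f (h i) - g (h i))) / L i)
     = (\<Sum>i\<in>S. (f u - f (h i)) / L i) - (\<Sum>i\<in>S. (g u - g (h i)) / L i)"
  proof -
    fix S :: "'a set" and h :: "'a \<Rightarrow> 'b"
    have "(\<Sum>i\<in>S. (f u - g u - (f (h i) - g (h i))) / L i)
       = (\<Sum>i\<in>S. (f u - f (h i)) / L i - (g u - g (h i)) / L i)"
      by (rule sum.cong) (auto simp: diff_divide_distrib)
    thus "(\<Sum>i\<in>S. (f u - g u - (f (h i) - g (h i))) / L i)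
     = (\<Sum>i\<in>S. (f u - f (h i)) / L i) - (\<Sum>i\<in>S. (g u - g (h i)) / L i)"
      by (simp add: sum_subtractf)
  qed
  show ?thesis unfolding lap_def a by simp
qed

lemma lap_scale: "lap E ep eb L (\<lambda>x. c * f x) u = c * lap E ep eb L f u"
  by (simp add: lap_def sum_distrib_left algebra_simps)

lemma lap_div: "lap E ep eb L (\<lambda>x. f x / c) u = lap E ep eb L f u / c"
  using lap_scale[of E ep eb L "1/c" f u] by simp

lemma lap_cong:
  assumes "wfg V E ep eb L" "u \<in> V" "\<forall>x\<in>V. f x = g x"
  shows "lap E ep eb L f u = lap E ep eb L g u"
  using assms unfolding lap_def wfg_def by (intro arg_cong2[where f="(+)"] sum.cong) auto

lemma lap_sum_zero:
  assumes "wfg V E ep eb L"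
  shows "(\<Sum>u\<in>V. lap E ep eb L f u) = 0"
  using green[OF assms, of "\<lambda>_. 1" f] by simp



lemma lap_zero_const:
  assumes wf: "wfg V E ep eb L" and con: "connected_graph V E ep eb"
    and h: "\<forall>u\<in>V. lap E ep eb L f u = 0" and x: "x \<in> V" and y: "y \<in> V"
  shows "f x = f y"
proof -
  have fE: "finite E" and pos: "\<forall>i\<in>E. L i > 0" using wf unfolding wfg_def by auto
  have s0: "(\<Sum>i\<in>E. (f (ep i) - f (eb i)) * (f (ep i) - f (eb i)) / L i) = 0"
    using green[OF wf, of f f] h by simp
  have nn: "\<And>i. i \<in> E \<Longrightarrow> 0 \<le> (f (ep i) - f (eb i)) * (f (ep i) - f (eb i)) / L i"
    using pos by (auto intro: divide_nonneg_pos)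
  have z: "\<forall>i\<in>E. (f (ep i) - f (eb i)) * (f (ep i) - f (eb i)) / L i = 0"
    using sum_nonneg_eq_0_iff[OF fE nn] s0 by simp
  have e: "\<forall>i\<in>E. f (ep i) = f (eb i)"
  proof
    fix i assume i: "i \<in> E"
    have a: "(f (ep i) - f (eb i)) * (f (ep i) - f (eb i)) / L i = 0" using z i by blast
    have "L i > 0" using pos i by blast
    hence "(f (ep i) - f (eb i)) * (f (ep i) - f (eb i)) = 0" using a by simp
    thus "f (ep i) = f (eb i)" by simp
  qed
  have estep: "\<And>a b. (a, b) \<in> adj E ep eb \<Longrightarrow> f a = f b"
    using e unfolding adj_def by auto
  have "(x, y) \<in> (adj E ep eb)\<^sup>*" using con x y unfolding connected_graph_def by blast
  thus ?thesis
  proof (induction rule: rtrancl_induct)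
    case base then show ?case by simp
  next
    case (step b c) then show ?case using estep[of b c] by simp
  qed
qed

lemma lap_add: "lap E ep eb L (\<lambda>x. f x + g x) u = lap E ep eb L f u + lap E ep eb L g u"
  using lap_diff[of E ep eb L f "\<lambda>x. - g x" u] lap_scale[of E ep eb L "-1" g u] by simp

lemma lap_sum:
  assumes "finite S"
  shows "lap E ep eb L (\<lambda>x. \<Sum>w\<in>S. h w x) u = (\<Sum>w\<in>S. lap E ep eb L (h w) u)"
  using assms
proof (induction S rule: finite_induct)
  case empty then show ?case by (simp add: lap_def)
next
  case (insert a S) then show ?case by (simp add: lap_add)
qed

lemma lap_expand:
  assumes wf: "wfg V E ep eb L" and u: "u \<in> V"
  shows "lap E ep eb L f u = (\<Sum>w\<in>V. lap E ep eb L (\<lambda>x. if x = w then 1 else 0) u * f w)"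
proof -
  have fV: "finite V" using wf unfolding wfg_def by auto
  have "lap E ep eb L f u = lap E ep eb L (\<lambda>x. \<Sum>w\<in>V. f w * (if x = w then 1 else 0)) u"
  proof (rule lap_cong[OF wf u], intro ballI)
    fix x assume x: "x \<in> V"
    have "(\<Sum>w\<in>V. f w * (if x = w then 1 else 0)) = (\<Sum>w\<in>V. if x = w then f w else 0)"
      by (rule sum.cong) auto
    thus "f x = (\<Sum>w\<in>V. f w * (if x = w then 1 else 0))" using fV x by simp
  qed
  also have "\<dots> = (\<Sum>w\<in>V. lap E ep eb L (\<lambda>x. f w * (if x = w then 1 else 0)) u)"
    by (rule lap_sum[OF fV])
  also have "\<dots> = (\<Sum>w\<in>V. lap E ep eb L (\<lambda>x. if x = w then 1 else 0) u * f w)"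
    by (rule sum.cong) (auto simp: lap_scale)
  finally show ?thesis .
qed

lemma lap_solve:
  assumes wf: "wfg V E ep eb L" and con: "connected_graph V E ep eb"
    and z: "z \<in> V" and s: "(\<Sum>u\<in>V. s u) = (0::real)"
  shows "\<exists>g. g z = (0::real) \<and> (\<forall>u\<in>V. lap E ep eb L g u = s u) \<and> (\<forall>u. u \<notin> V \<longrightarrow> g u = 0)"
proof -
  have fV: "finite V" using wf unfolding wfg_def by auto
  define W where "W = V - {z}"
  define M where "M u w = lap E ep eb L (\<lambda>x. if x = w then 1 else 0) u" for u w
  have fW: "finite W" using fV unfolding W_def by simp
  have red: "\<And>g u. u \<in> V \<Longrightarrow> g z = 0 \<Longrightarrow> lap E ep eb L g u = (\<Sum>w\<in>W. M u w * g w)"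
  proof -
    fix g :: "_ \<Rightarrow> real" and u assume u: "u \<in> V" and gz: "g z = 0"
    have "lap E ep eb L g u = (\<Sum>w\<in>V. M u w * g w)" unfolding M_def by (rule lap_expand[OF wf u])
    also have "\<dots> = M u z * g z + (\<Sum>w\<in>W. M u w * g w)"
      unfolding W_def using fV z by (simp add: sum.remove)
    finally show "lap E ep eb L g u = (\<Sum>w\<in>W. M u w * g w)" using gz by simp
  qed
  have atz: "\<And>g. lap E ep eb L g z = - (\<Sum>u\<in>W. lap E ep eb L g u)"
  proof -
    fix g
    have "lap E ep eb L g z + (\<Sum>u\<in>W. lap E ep eb L g u) = 0"
      using lap_sum_zero[OF wf, of g] fV z unfolding W_def by (simp add: sum.remove)
    thus "lap E ep eb L g z = - (\<Sum>u\<in>W. lap E ep eb L g u)" by linarith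
  qed
  have sz: "s z = - (\<Sum>u\<in>W. s u)"
    using s fV z unfolding W_def by (simp add: sum.remove)
  have "\<exists>f. \<forall>u\<in>W. (\<Sum>w\<in>W. M u w * f w) = s u"
  proof (rule lin_exist[OF fW])
    fix f assume hf: "\<forall>u\<in>W. (\<Sum>w\<in>W. M u w * f w) = 0"
    define g where "g x = (if x \<in> W then f x else 0)" for x
    have gz: "g z = 0" unfolding g_def W_def by simp
    have gW: "\<And>u. u \<in> W \<Longrightarrow> lap E ep eb L g u = 0"
    proof -
      fix u assume u: "u \<in> W"
      have "lap E ep eb L g u = (\<Sum>w\<in>W. M u w * g w)" using red[of u g] u gz unfolding W_def by simp
      also have "\<dots> = (\<Sum>w\<in>W. M u w * f w)" by (rule sum.cong) (auto simp: g_def)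
      finally show "lap E ep eb L g u = 0" using hf u by simp
    qed
    have "\<forall>u\<in>V. lap E ep eb L g u = 0"
    proof
      fix u assume u: "u \<in> V"
      show "lap E ep eb L g u = 0"
      proof (cases "u = z")
        case True then show ?thesis using atz[of g] gW by simp
      next
        case False then show ?thesis using gW u unfolding W_def by simp
      qed
    qed
    hence "\<forall>x\<in>V. g x = g z" using lap_zero_const[OF wf con] z by blast
    show "\<forall>w\<in>W. f w = 0"
    proof
      fix w assume w: "w \<in> W"
      have "g w = 0" using \<open>\<forall>x\<in>V. g x = g z\<close> gz w unfolding W_def by simp
      thus "f w = 0" using w unfolding g_def by simp
    qed
  qed
  then obtain f where hf: "\<forall>u\<in>W. (\<Sum>w\<in>W. M u w * f w) = s u" by blast
  define g where "g x = (if x \<in> W then f x else 0)" for x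
  have gz: "g z = 0" unfolding g_def W_def by simp
  have gW: "\<And>u. u \<in> W \<Longrightarrow> lap E ep eb L g u = s u"
  proof -
    fix u assume u: "u \<in> W"
    have "lap E ep eb L g u = (\<Sum>w\<in>W. M u w * g w)" using red[of u g] u gz unfolding W_def by simp
    also have "\<dots> = (\<Sum>w\<in>W. M u w * f w)" by (rule sum.cong) (auto simp: g_def)
    finally show "lap E ep eb L g u = s u" using hf u by simp
  qed
  have "\<forall>u\<in>V. lap E ep eb L g u = s u"
  proof
    fix u assume u: "u \<in> V"
    show "lap E ep eb L g u = s u"
    proof (cases "u = z")
      case True
      have "(\<Sum>u\<in>W. lap E ep eb L g u) = (\<Sum>u\<in>W. s u)" by (rule sum.cong) (auto simp: gW)
      then show ?thesis using True atz[of g] sz by simp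
    next
      case False then show ?thesis using gW u unfolding W_def by simp
    qed
  qed
  moreover have "\<forall>u. u \<notin> V \<longrightarrow> g u = 0" unfolding g_def W_def by auto
  ultimately show ?thesis using gz by (intro exI[of _ g]) simp
qed

definition JP where
  "JP V E ep eb L z y f \<longleftrightarrow> f z = 0 \<and>
        (\<forall>u\<in>V. lap E ep eb L f u = (if u = y then 1 else 0) - (if u = z then 1 else 0)) \<and>
        (\<forall>u. u \<notin> V \<longrightarrow> f u = 0)"

lemma jvolt_spec:
  assumes wf: "wfg V E ep eb L" and con: "connected_graph V E ep eb"
    and y: "y \<in> V" and z: "z \<in> V"
  shows "JP V E ep eb L z y (\<lambda>x. jvolt V E ep eb L z x y)"
proof -
  have fV: "finite V" using wf unfolding wfg_def by auto
  have "(\<Sum>u\<in>V. (if u = y then 1 else 0) - (if u = z then 1 else 0) :: real) = 0"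
    using fV y z by (simp add: sum_subtractf)
  from lap_solve[OF wf con z this] obtain g where "JP V E ep eb L z y g"
    unfolding JP_def by blast
  moreover have "\<And>f g. JP V E ep eb L z y f \<Longrightarrow> JP V E ep eb L z y g \<Longrightarrow> f = g"
  proof
    fix f g x assume f: "JP V E ep eb L z y f" and g: "JP V E ep eb L z y g"
    have "\<forall>u\<in>V. lap E ep eb L (\<lambda>x. f x - g x) u = 0"
      using f g unfolding JP_def by (simp add: lap_diff)
    hence "\<forall>x\<in>V. f x - g x = f z - g z" using lap_zero_const[OF wf con _ _ z] by blast
    thus "f x = g x" using f g unfolding JP_def by (cases "x \<in> V") auto
  qed
  ultimately have "\<exists>!f. JP V E ep eb L z y f" by blast
  from theI'[OF this] show ?thesis
    unfolding jvolt_def JP_def[symmetric] by simp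
qed



definition cg where "cg V E ep eb L \<longleftrightarrow> wfg V E ep eb L \<and> connected_graph V E ep eb"

context
  fixes V :: "'v set" and E :: "'e set" and ep eb :: "'e \<Rightarrow> 'v" and L :: "'e \<Rightarrow> real"
  assumes G: "cg V E ep eb L"
begin

abbreviation "J \<equiv> jvolt V E ep eb L"

lemma wf: "wfg V E ep eb L" using G unfolding cg_def by simp
lemma con: "connected_graph V E ep eb" using G unfolding cg_def by simp
lemma fV: "finite V" using wf unfolding wfg_def by simp

lemma J_lap: "y \<in> V \<Longrightarrow> z \<in> V \<Longrightarrow> u \<in> V \<Longrightarrow>
  lap E ep eb L (\<lambda>x. J z x y) u = (if u = y then 1 else 0) - (if u = z then 1 else 0)"
  using jvolt_spec[OF wf con] unfolding JP_def by blast

lemma J_ground: "y \<in> V \<Longrightarrow> z \<in> V \<Longrightarrow> J z z y = 0"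
  using jvolt_spec[OF wf con] unfolding JP_def by blast

lemma J_char:
  assumes y: "y \<in> V" and z: "z \<in> V" and x: "x \<in> V" and c: "c \<noteq> 0"
    and h: "\<forall>u\<in>V. lap E ep eb L f u = c * ((if u = y then 1 else 0) - (if u = z then 1 else 0))"
  shows "J z x y = (f x - f z) / c"
proof -
  have "\<forall>u\<in>V. lap E ep eb L (\<lambda>x. f x / c - J z x y) u = 0"
    using h c J_lap[OF y z] by (simp add: lap_diff lap_div)
  hence "(\<lambda>x. f x / c - J z x y) x = (\<lambda>x. f x / c - J z x y) z"
    using lap_zero_const[OF wf con _ x z] by blast
  hence "f x / c - J z x y = f z / c" using J_ground[OF y z] by simp
  thus ?thesis using c by (simp add: diff_divide_distrib)
qed

lemma J_same: "z \<in> V \<Longrightarrow> x \<in> V \<Longrightarrow> J z x z = 0"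
  using J_char[of z z x 1 "\<lambda>_. 0"] by (simp add: lap_def)

lemma J_sym:
  assumes x: "x \<in> V" and y: "y \<in> V" and z: "z \<in> V"
  shows "J z x y = J z y x"
proof -
  have A: "\<And>a b. a \<in> V \<Longrightarrow> b \<in> V \<Longrightarrow> (\<Sum>u\<in>V. J z u a * lap E ep eb L (\<lambda>x. J z x b) u) = J z b a"
  proof -
    fix a b assume a: "a \<in> V" and b: "b \<in> V"
    have "(\<Sum>u\<in>V. J z u a * lap E ep eb L (\<lambda>x. J z x b) u)
       = (\<Sum>u\<in>V. (if u = b then J z u a else 0) - (if u = z then J z u a else 0))"
      by (rule sum.cong) (auto simp: J_lap[OF b z])
    also have "\<dots> = J z b a - J z z a" using fV b z by (simp add: sum_subtractf)
    finally show "(\<Sum>u\<in>V. J z u a * lap E ep eb L (\<lambda>x. J z x b) u) = J z b a"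
      using J_ground[OF a z] by simp
  qed
  have "J z y x = (\<Sum>i\<in>E. (J z (ep i) x - J z (eb i) x) * (J z (ep i) y - J z (eb i) y) / L i)"
    using A[OF x y] green[OF wf] by simp
  also have "\<dots> = (\<Sum>i\<in>E. (J z (ep i) y - J z (eb i) y) * (J z (ep i) x - J z (eb i) x) / L i)"
    by (simp add: mult.commute)
  also have "\<dots> = J z x y"
    using A[OF y x] green[OF wf] by simp
  finally show ?thesis by simp
qed

lemma J_gc:
  assumes x: "x \<in> V" and y: "y \<in> V" and z: "z \<in> V" and w: "w \<in> V"
  shows "J w x y = J z x y - J z x w - J z w y + J z w w"
proof -
  have "J w x y = ((J z x y - J z x w) - (J z w y - J z w w)) / 1"
    by (rule J_char[OF y w x, of 1 "\<lambda>x. J z x y - J z x w"])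
       (auto simp: lap_diff J_lap[OF y z] J_lap[OF w z])
  thus ?thesis by simp
qed

lemma eff_sym: "x \<in> V \<Longrightarrow> y \<in> V \<Longrightarrow> eff_res V E ep eb L x y = eff_res V E ep eb L y x"
  unfolding eff_res_def using J_gc[of x x x y] J_ground[of _ x] J_same[of x y] by simp

lemma eff_nonneg:
  assumes x: "x \<in> V" and y: "y \<in> V"
  shows "0 \<le> eff_res V E ep eb L x y"
proof -
  have pos: "\<forall>i\<in>E. L i > 0" using wf unfolding wfg_def by simp
  have "(\<Sum>u\<in>V. J y u x * lap E ep eb L (\<lambda>t. J y t x) u)
       = (\<Sum>u\<in>V. (if u = x then J y u x else 0) - (if u = y then J y u x else 0))"
    by (rule sum.cong) (auto simp: J_lap[OF x y])
  also have "\<dots> = J y x x - J y y x" using fV x y by (simp add: sum_subtractf)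
  finally have "J y x x = (\<Sum>i\<in>E. (J y (ep i) x - J y (eb i) x) * (J y (ep i) x - J y (eb i) x) / L i)"
    using green[OF wf] J_ground[OF x y] by simp
  also have "\<dots> \<ge> 0" using pos by (intro sum_nonneg) (auto intro: divide_nonneg_pos)
  finally show ?thesis unfolding eff_res_def .
qed

end


lemma sum_filter_remove:
  assumes "i \<in> E" "finite E"
  shows "(\<Sum>j\<in>{j\<in>E. g j = u}. F j) = (\<Sum>j\<in>{j\<in>E-{i}. g j = u}. F j) + (if g i = u then F i else (0::real))"
proof (cases "g i = u")
  case True
  hence "{j\<in>E. g j = u} = insert i {j\<in>E-{i}. g j = u}" using assms by auto
  then show ?thesis using True assms by simp
next
  case False
  hence "{j\<in>E. g j = u} = {j\<in>E-{i}. g j = u}" by auto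
  then show ?thesis using False by simp
qed

lemma lap_remove:
  assumes "i \<in> E" "finite E"
  shows "lap E ep eb L f u = lap (E - {i}) ep eb L f u
      + (if ep i = u then (f u - f (eb i)) / L i else 0)
      + (if eb i = u then (f u - f (ep i)) / L i else 0)"
proof -
  note gen = sum_filter_remove[OF assms]
  show ?thesis unfolding lap_def gen by simp
qed

lemma cg_del:
  assumes "cg V E ep eb L" "connected_graph V (E - {i}) ep eb"
  shows "cg V (E - {i}) ep eb L"
  using assms unfolding cg_def wfg_def by auto

lemma lap_const: "lap E ep eb L (\<lambda>x. c) u = 0"
  by (simp add: lap_def)

lemma bridge_sep:
  assumes G: "cg V E ep eb L" and i: "i \<in> E" and br: "is_bridge V E ep eb i"
  shows "(ep i, eb i) \<notin> (adj (E - {i}) ep eb)\<^sup>*"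
proof
  let ?R = "adj (E - {i}) ep eb"
  assume ab: "(ep i, eb i) \<in> ?R\<^sup>*"
  have symR: "\<And>x y. (x, y) \<in> ?R \<Longrightarrow> (y, x) \<in> ?R" unfolding adj_def by auto
  have ba: "(eb i, ep i) \<in> ?R\<^sup>*"
  proof -
    have "\<And>x y. (x, y) \<in> ?R\<^sup>* \<Longrightarrow> (y, x) \<in> ?R\<^sup>*"
    proof -
      fix x y assume "(x, y) \<in> ?R\<^sup>*"
      thus "(y, x) \<in> ?R\<^sup>*"
      proof (induction rule: rtrancl_induct)
        case base then show ?case by simp
      next
        case (step y z) then show ?case using symR[of y z] by (meson converse_rtrancl_into_rtrancl)
      qed
    qed
    thus ?thesis using ab by blast
  qed
  have sub: "adj E ep eb \<subseteq> ?R\<^sup>*"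
  proof
    fix x assume "x \<in> adj E ep eb"
    then obtain j where j: "j \<in> E" "x = (ep j, eb j) \<or> x = (eb j, ep j)" unfolding adj_def by auto
    show "x \<in> ?R\<^sup>*"
    proof (cases "j = i")
      case True then show ?thesis using j ab ba by auto
    next
      case False then have "x \<in> ?R" using j unfolding adj_def by auto
      then show ?thesis by auto
    qed
  qed
  have "connected_graph V (E - {i}) ep eb"
    unfolding connected_graph_def
  proof (intro ballI)
    fix x y assume "x \<in> V" "y \<in> V"
    hence "(x, y) \<in> (adj E ep eb)\<^sup>*" using G unfolding cg_def connected_graph_def by blast
    thus "(x, y) \<in> ?R\<^sup>*" using rtrancl_subset_rtrancl[OF sub] by blast
  qed
  thus False using br unfolding is_bridge_def by simp
qed



lemma add_edge:
  assumes G: "cg V E ep eb L" and i: "i \<in> E" and G': "cg V (E - {i}) ep eb L"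
    and yz: "(y = ep i \<and> z = eb i) \<or> (y = eb i \<and> z = ep i)" and x: "x \<in> V"
  shows "jvolt V E ep eb L z x y
     = jvolt V (E - {i}) ep eb L z x y * L i / (L i + jvolt V (E - {i}) ep eb L z y y)"
proof -
  let ?h = "\<lambda>x. jvolt V (E - {i}) ep eb L z x y"
  define R where "R = jvolt V (E - {i}) ep eb L z y y"
  define l where "l = L i"
  have wf: "wfg V E ep eb L" using G unfolding cg_def by simp
  have fE: "finite E" and yV: "y \<in> V" and zV: "z \<in> V" and l: "l > 0"
    using wf i yz unfolding wfg_def l_def by auto
  have R0: "0 \<le> R" using eff_nonneg[OF G' yV zV] unfolding R_def eff_res_def .
  have hz: "?h z = 0" using J_ground[OF G' yV zV] .
  have hy: "?h y = R" unfolding R_def ..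
  have c: "(l + R) / l \<noteq> 0" using l R0 by simp
  have lapE: "\<forall>u\<in>V. lap E ep eb L ?h u = (l + R) / l * ((if u = y then 1 else 0) - (if u = z then 1 else 0))"
  proof
    fix u assume u: "u \<in> V"
    have base: "lap (E - {i}) ep eb L ?h u = (if u = y then 1 else 0) - (if u = z then 1 else 0)"
      using J_lap[OF G' yV zV u] .
    show "lap E ep eb L ?h u = (l + R) / l * ((if u = y then 1 else 0) - (if u = z then 1 else 0))"
    proof (cases "y = z")
      case True
      hence "R = 0" using hz hy by simp
      then show ?thesis using True lap_remove[OF i fE, of ep eb L ?h u] base yz l_def by auto
    next
      case False
      then show ?thesis using lap_remove[OF i fE, of ep eb L ?h u] base yz hz hy l l_def
        by (auto simp: field_simps)
    qed
  qed
  have "jvolt V E ep eb L z x y = (?h x - ?h z) / ((l + R) / l)"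
    by (rule J_char[OF G yV zV x c lapE])
  thus ?thesis unfolding R_def[symmetric] l_def[symmetric] using hz by simp
qed



lemma da_db:
  assumes G: "cg V E ep eb L" and a: "a \<in> V" and b: "b \<in> V" and p: "p \<in> V"
  shows "jvolt V E ep eb L p a a - jvolt V E ep eb L p b b
     = 2 * jvolt V E ep eb L a p b - eff_res V E ep eb L a b"
proof -
  let ?J = "jvolt V E ep eb L"
  have 1: "?J p a a = ?J a a a - ?J a a p - ?J a p a + ?J a p p" using J_gc[OF G a a a p] .
  have 2: "?J p b b = ?J a b b - ?J a b p - ?J a p b + ?J a p p" using J_gc[OF G b b a p] .
  have 3: "?J a a a = 0" "?J a a p = 0" using J_ground[OF G a a] J_ground[OF G p a] by auto
  have 4: "?J a p a = 0" using J_same[OF G a p] .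
  have 5: "?J a b p = ?J a p b" using J_sym[OF G b p a] .
  have 6: "?J a b b = eff_res V E ep eb L a b"
    using eff_sym[OF G a b] unfolding eff_res_def by simp
  show ?thesis using 1 2 3 4 5 6 by simp
qed

lemma nonbridge_edge:
  assumes G: "cg V E ep eb L" and i: "i \<in> E" and nb: "\<not> is_bridge V E ep eb i" and p: "p \<in> V"
  shows "0 \<le> R_del V E ep eb L i"
    and "eff_res V E ep eb L (ep i) (eb i) = L i * R_del V E ep eb L i / (L i + R_del V E ep eb L i)"
    and "jvolt V E ep eb L p (ep i) (ep i) - jvolt V E ep eb L p (eb i) (eb i)
       = L i * (R_a V E ep eb L i p - R_b V E ep eb L i p) / (L i + R_del V E ep eb L i)"
proof -
  define a where "a = ep i"
  define b where "b = eb i"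
  define l where "l = L i"
  let ?J = "jvolt V E ep eb L" and ?J' = "jvolt V (E - {i}) ep eb L"
  have G': "cg V (E - {i}) ep eb L"
    using cg_del[OF G] nb unfolding is_bridge_def by simp
  have wf: "wfg V E ep eb L" using G unfolding cg_def by simp
  have aV: "a \<in> V" and bV: "b \<in> V" and l: "l > 0"
    using wf i unfolding wfg_def a_def b_def l_def by auto
  define R where "R = R_del V E ep eb L i"
  have RJ: "R = ?J' b a a" unfolding R_def R_del_def eff_res_def a_def b_def ..
  have R': "?J' a b b = R" using eff_sym[OF G' aV bV] unfolding RJ eff_res_def by simp
  show R0: "0 \<le> R_del V E ep eb L i"
    using eff_nonneg[OF G' aV bV] unfolding R_del_def a_def b_def .
  have e1: "\<And>x. x \<in> V \<Longrightarrow> ?J b x a = ?J' b x a * l / (l + R)"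
    using add_edge[OF G i G', of a b] unfolding a_def b_def l_def RJ by auto
  have e2: "\<And>x. x \<in> V \<Longrightarrow> ?J a x b = ?J' a x b * l / (l + R)"
    using add_edge[OF G i G', of b a] R' unfolding a_def b_def l_def by auto
  have rab: "eff_res V E ep eb L a b = l * R / (l + R)"
    unfolding eff_res_def using e1[OF aV] RJ by simp
  thus "eff_res V E ep eb L (ep i) (eb i) = L i * R_del V E ep eb L i / (L i + R_del V E ep eb L i)"
    unfolding a_def b_def l_def R_def .
  define Ra where "Ra = R_a V E ep eb L i p"
  define Rb where "Rb = R_b V E ep eb L i p"
  have RaJ: "Ra = ?J' a p b" unfolding Ra_def R_a_def a_def b_def ..
  have RbJ: "Rb = ?J' b p a" unfolding Rb_def R_b_def a_def b_def ..
  have "?J' b p a = ?J' a p a - ?J' a p b - ?J' a b a + ?J' a b b" using J_gc[OF G' p aV aV bV] .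
  hence RaRb: "Rb = R - Ra" using J_same[OF G' aV p] J_same[OF G' aV bV] R' RaJ RbJ by simp
  have "?J p a a - ?J p b b = 2 * ?J a p b - eff_res V E ep eb L a b" by (rule da_db[OF G aV bV p])
  also have "\<dots> = 2 * (Ra * l / (l + R)) - l * R / (l + R)" using e2[OF p] RaJ rab by simp
  also have "\<dots> = l * (Ra - Rb) / (l + R)"
  proof -
    have lR: "l + R \<noteq> 0" using l R0 unfolding R_def by linarith
    have "Ra - Rb = 2 * Ra - R" using RaRb by simp
    moreover have "2 * (Ra * l / (l + R)) - l * R / (l + R) = l * (2 * Ra - R) / (l + R)"
      by (simp add: diff_divide_distrib right_diff_distrib mult_ac)
    ultimately show ?thesis by simp
  qed
  finally show "?J p (ep i) (ep i) - ?J p (eb i) (eb i)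
       = L i * (R_a V E ep eb L i p - R_b V E ep eb L i p) / (L i + R_del V E ep eb L i)"
    unfolding a_def b_def l_def Ra_def Rb_def R_def .
qed



lemma bridge_edge:
  assumes G: "cg V E ep eb L" and i: "i \<in> E" and br: "is_bridge V E ep eb i" and p: "p \<in> V"
  shows "eff_res V E ep eb L (ep i) (eb i) = L i"
    and "(jvolt V E ep eb L p (ep i) (ep i) - jvolt V E ep eb L p (eb i) (eb i))\<^sup>2 = (L i)\<^sup>2"
proof -
  define a where "a = ep i"
  define b where "b = eb i"
  define l where "l = L i"
  let ?J = "jvolt V E ep eb L"
  let ?R = "adj (E - {i}) ep eb"
  define C where "C x \<longleftrightarrow> x \<in> V \<and> (a, x) \<in> ?R\<^sup>*" for x
  have wf: "wfg V E ep eb L" using G unfolding cg_def by simp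
  have fE: "finite E" using wf unfolding wfg_def by simp
  have aV: "a \<in> V" and bV: "b \<in> V" and l: "l > 0"
    using wf i unfolding wfg_def a_def b_def l_def by auto
  have nab: "(a, b) \<notin> ?R\<^sup>*" using bridge_sep[OF G i br] unfolding a_def b_def .
  have Ca: "C a" using aV unfolding C_def by simp
  have Cb: "\<not> C b" using nab unfolding C_def by simp
  have ab: "a \<noteq> b" using Ca Cb by auto
  have clos: "\<And>j. j \<in> E - {i} \<Longrightarrow> C (ep j) = C (eb j)"
  proof -
    fix j assume j: "j \<in> E - {i}"
    have V: "ep j \<in> V" "eb j \<in> V" using wf j unfolding wfg_def by auto
    have e1: "(ep j, eb j) \<in> ?R" "(eb j, ep j) \<in> ?R" using j unfolding adj_def by auto
    show "C (ep j) = C (eb j)"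
      unfolding C_def using V e1 rtrancl_into_rtrancl[of a _ ?R] by blast
  qed
  have clos': "\<And>j. j \<in> E \<Longrightarrow> j \<noteq> i \<Longrightarrow> C (ep j) = C (eb j)" using clos by blast
  define f where "f x = (if C x then l else 0)" for x
  have lap0: "\<And>u. lap (E - {i}) ep eb L f u = 0"
  proof -
    fix u
    have s1: "(\<Sum>j\<in>{j \<in> E - {i}. ep j = u}. (f u - f (eb j)) / L j) = 0"
      by (rule sum.neutral) (auto simp: f_def clos')
    have s2: "(\<Sum>j\<in>{j \<in> E - {i}. eb j = u}. (f u - f (ep j)) / L j) = 0"
      by (rule sum.neutral) (auto simp: f_def clos')
    show "lap (E - {i}) ep eb L f u = 0" unfolding lap_def s1 s2 by simp
  qed
  have fa: "f a = l" and fb: "f b = 0" using Ca Cb unfolding f_def by auto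
  have lapf: "\<forall>u\<in>V. lap E ep eb L f u = 1 * ((if u = a then 1 else 0) - (if u = b then 1 else 0))"
  proof
    fix u assume u: "u \<in> V"
    show "lap E ep eb L f u = 1 * ((if u = a then 1 else 0) - (if u = b then 1 else 0))"
      using lap_remove[OF i fE, of ep eb L f u] lap0[of u] ab fa fb l
      unfolding a_def[symmetric] b_def[symmetric] l_def[symmetric] by auto
  qed
  have Jba: "?J b a a = (f a - f b) / 1" by (rule J_char[OF G aV bV aV _ lapf]) simp
  show rab: "eff_res V E ep eb L (ep i) (eb i) = L i"
    unfolding eff_res_def a_def[symmetric] b_def[symmetric] l_def[symmetric] using Jba fa fb by simp
  define g where "g x = l - f x" for x
  have lapg: "\<forall>u\<in>V. lap E ep eb L g u = 1 * ((if u = b then 1 else 0) - (if u = a then 1 else 0))"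
  proof
    fix u assume u: "u \<in> V"
    have "lap E ep eb L g u = lap E ep eb L (\<lambda>x. l) u - lap E ep eb L f u"
      unfolding g_def by (rule lap_diff)
    thus "lap E ep eb L g u = 1 * ((if u = b then 1 else 0) - (if u = a then 1 else 0))"
      using lapf u by (simp add: lap_const)
  qed
  have Jab: "?J a p b = (g p - g a) / 1" by (rule J_char[OF G bV aV p _ lapg]) simp
  have ga: "g a = 0" using fa unfolding g_def by simp
  have "?J p a a - ?J p b b = 2 * ?J a p b - eff_res V E ep eb L a b" by (rule da_db[OF G aV bV p])
  also have "\<dots> = 2 * g p - l" using Jab ga rab unfolding a_def b_def l_def by simp
  finally have d: "?J p a a - ?J p b b = 2 * g p - l" .
  have "g p = 0 \<or> g p = l" unfolding g_def f_def by auto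
  hence "(2 * g p - l)\<^sup>2 = l\<^sup>2" by (auto simp: power2_eq_square algebra_simps)
  thus "(?J p (ep i) (ep i) - ?J p (eb i) (eb i))\<^sup>2 = (L i)\<^sup>2"
    using d unfolding a_def b_def l_def by simp
qed



lemma claimA:
  assumes G: "cg V E ep eb L" and p: "p \<in> V"
  shows "2 * (\<Sum>q\<in>V. jvolt V E ep eb L p q q)
    = (\<Sum>i\<in>E. (jvolt V E ep eb L p (ep i) (ep i) - jvolt V E ep eb L p (eb i) (eb i))\<^sup>2 / L i
        + eff_res V E ep eb L (ep i) (eb i) / L i
          * (jvolt V E ep eb L p (ep i) (ep i) + jvolt V E ep eb L p (eb i) (eb i)))"
proof -
  let ?J = "jvolt V E ep eb L"
  define d where "d u = ?J p u u" for u
  have wf: "wfg V E ep eb L" using G unfolding cg_def by simp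
  have fV: "finite V" using wf unfolding wfg_def by simp
  have dp: "d p = 0" unfolding d_def using J_ground[OF G p p] .
  have "(\<Sum>u\<in>V. lap E ep eb L (\<lambda>x. d u * ?J p x u) u) = (\<Sum>u\<in>V. d u - (if u = p then d u else 0))"
    by (rule sum.cong) (auto simp: lap_scale J_lap[OF G _ p])
  also have "\<dots> = (\<Sum>u\<in>V. d u)" using fV p dp by (simp add: sum_subtractf)
  finally have D: "(\<Sum>u\<in>V. lap E ep eb L (\<lambda>x. d u * ?J p x u) u) = (\<Sum>u\<in>V. d u)" .
  have "(\<Sum>u\<in>V. lap E ep eb L (\<lambda>x. d u * ?J p x u) u)
     = (\<Sum>i\<in>E. (d (ep i) * ?J p (ep i) (ep i) - d (ep i) * ?J p (eb i) (ep i)) / L i)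
     + (\<Sum>i\<in>E. (d (eb i) * ?J p (eb i) (eb i) - d (eb i) * ?J p (ep i) (eb i)) / L i)"
    by (rule diag_group[OF wf])
  also have "\<dots> = (\<Sum>i\<in>E. ((d (ep i) * d (ep i) - d (ep i) * ?J p (ep i) (eb i))
                 + (d (eb i) * d (eb i) - d (eb i) * ?J p (ep i) (eb i))) / L i)"
    unfolding sum.distrib[symmetric] add_divide_distrib[symmetric]
  proof (rule sum.cong[OF refl])
    fix i assume i: "i \<in> E"
    have V: "ep i \<in> V" "eb i \<in> V" using wf i unfolding wfg_def by auto
    show "(d (ep i) * ?J p (ep i) (ep i) - d (ep i) * ?J p (eb i) (ep i) +
          (d (eb i) * ?J p (eb i) (eb i) - d (eb i) * ?J p (ep i) (eb i))) / L i =
         (d (ep i) * d (ep i) - d (ep i) * ?J p (ep i) (eb i) +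
          (d (eb i) * d (eb i) - d (eb i) * ?J p (ep i) (eb i))) / L i"
      using J_sym[OF G V(2) V(1) p] unfolding d_def by simp
  qed
  finally have S: "(\<Sum>u\<in>V. d u) = (\<Sum>i\<in>E. ((d (ep i) * d (ep i) - d (ep i) * ?J p (ep i) (eb i))
                 + (d (eb i) * d (eb i) - d (eb i) * ?J p (ep i) (eb i))) / L i)" using D by simp
  have "2 * (\<Sum>u\<in>V. d u) = (\<Sum>i\<in>E. (d (ep i) - d (eb i))\<^sup>2 / L i
        + eff_res V E ep eb L (ep i) (eb i) / L i * (d (ep i) + d (eb i)))"
    unfolding S sum_distrib_left
  proof (rule sum.cong[OF refl])
    fix i assume i: "i \<in> E"
    have V: "ep i \<in> V" "eb i \<in> V" using wf i unfolding wfg_def by auto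
    have Li: "L i \<noteq> 0" using wf i unfolding wfg_def by auto
    have r: "eff_res V E ep eb L (ep i) (eb i) = d (ep i) + d (eb i) - 2 * ?J p (ep i) (eb i)"
      unfolding eff_res_def d_def using J_gc[OF G V(1) V(1) p V(2)] J_sym[OF G V(2) V(1) p] by simp
    show "2 * (((d (ep i) * d (ep i) - d (ep i) * ?J p (ep i) (eb i))
                 + (d (eb i) * d (eb i) - d (eb i) * ?J p (ep i) (eb i))) / L i)
        = (d (ep i) - d (eb i))\<^sup>2 / L i
        + eff_res V E ep eb L (ep i) (eb i) / L i * (d (ep i) + d (eb i))"
      using Li unfolding r by (simp add: power2_eq_square field_simps)
  qed
  thus ?thesis unfolding d_def .
qed

lemma lim_helper: "((\<lambda>t::real. l / (l + t)) \<longlongrightarrow> 0) at_top"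
proof -
  have "filterlim (\<lambda>t::real. l + t) at_top at_top"
    by (rule filterlim_tendsto_add_at_top[OF tendsto_const filterlim_ident])
  hence "filterlim (\<lambda>t::real. l + t) at_infinity at_top"
    by (rule filterlim_at_top_imp_at_infinity)
  thus ?thesis by (rule tendsto_divide_0[OF tendsto_const])
qed

lemma lim1: "((\<lambda>t::real. t / (l + t)) \<longlongrightarrow> 1) at_top"
proof -
  have "((\<lambda>t::real. 1 - l / (l + t)) \<longlongrightarrow> 1 - 0) at_top"
    by (intro tendsto_diff tendsto_const lim_helper)
  moreover have "eventually (\<lambda>t::real. 1 - l / (l + t) = t / (l + t)) at_top"
  proof (rule eventually_mono[OF eventually_gt_at_top[of "- l"]])
    fix t :: real assume "- l < t"
    hence "l + t \<noteq> 0" by simp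
    thus "1 - l / (l + t) = t / (l + t)" by (simp add: field_simps)
  qed
  ultimately show ?thesis using tendsto_cong by fastforce
qed

lemma Lim_F1a: "Lim at_top (\<lambda>t::real. l * (0 - t)\<^sup>2 / (l + t)\<^sup>2) = l"
proof (rule tendsto_Lim[OF trivial_limit_at_top_linorder])
  have "((\<lambda>t::real. l * (t / (l + t))\<^sup>2) \<longlongrightarrow> l * 1\<^sup>2) at_top"
    by (intro tendsto_mult tendsto_const tendsto_power lim1)
  moreover have "\<And>t. l * (t / (l + t))\<^sup>2 = l * (0 - t)\<^sup>2 / (l + t)\<^sup>2"
    by (simp add: power_divide)
  ultimately show "((\<lambda>t::real. l * (0 - t)\<^sup>2 / (l + t)\<^sup>2) \<longlongrightarrow> l) at_top" by simp
qed

lemma Lim_F1b: "Lim at_top (\<lambda>t::real. l * (t - 0)\<^sup>2 / (l + t)\<^sup>2) = l"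
  using Lim_F1a[of l] by simp

lemma Lim_F2: "Lim at_top (\<lambda>t::real. l / (l + t)) = 0"
  by (rule tendsto_Lim[OF trivial_limit_at_top_linorder lim_helper])

lemma Lim_F3: "Lim at_top (\<lambda>t::real. t / (l + t)) = 1"
  by (rule tendsto_Lim[OF trivial_limit_at_top_linorder lim1])



lemma alg1': "(q::real) \<noteq> 0 \<Longrightarrow> l \<noteq> 0 \<Longrightarrow> (l * x / q)\<^sup>2 / l = l * x\<^sup>2 / q\<^sup>2"
  by (simp add: power2_eq_square field_simps)
lemma alg1: "(l::real) > 0 \<Longrightarrow> l + R > 0 \<Longrightarrow> (l * x / (l + R))\<^sup>2 / l = l * x\<^sup>2 / (l + R)\<^sup>2"
  by (rule alg1') auto
lemma alg2': "(q::real) \<noteq> 0 \<Longrightarrow> l \<noteq> 0 \<Longrightarrow> 1 - l * R / q / l = (q - R) / q"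
  by (simp add: field_simps)
lemma alg2: "(l::real) > 0 \<Longrightarrow> l + R > 0 \<Longrightarrow> 1 - l * R / (l + R) / l = l / (l + R)"
  using alg2'[of "l + R" l R] by simp
lemma alg3: "(l::real) > 0 \<Longrightarrow> l * R / (l + R) / l = R / (l + R)"
  by simp

lemma edge_vals:
  assumes G: "cg V E ep eb L" and i: "i \<in> E" and p: "p \<in> V"
  shows "edge_expr V E ep eb L i p (\<lambda>l R ra rb. l * (ra - rb)\<^sup>2 / (l + R)\<^sup>2)
      = (jvolt V E ep eb L p (ep i) (ep i) - jvolt V E ep eb L p (eb i) (eb i))\<^sup>2 / L i"
    and "edge_expr V E ep eb L i p (\<lambda>l R ra rb. l / (l + R)) = 1 - eff_res V E ep eb L (ep i) (eb i) / L i"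
    and "edge_expr V E ep eb L i p (\<lambda>l R ra rb. R / (l + R)) = eff_res V E ep eb L (ep i) (eb i) / L i"
proof -
  have wf: "wfg V E ep eb L" using G unfolding cg_def by simp
  have l: "L i > 0" using wf i unfolding wfg_def by auto
  have "edge_expr V E ep eb L i p (\<lambda>l R ra rb. l * (ra - rb)\<^sup>2 / (l + R)\<^sup>2)
      = (jvolt V E ep eb L p (ep i) (ep i) - jvolt V E ep eb L p (eb i) (eb i))\<^sup>2 / L i
   \<and> edge_expr V E ep eb L i p (\<lambda>l R ra rb. l / (l + R)) = 1 - eff_res V E ep eb L (ep i) (eb i) / L i
   \<and> edge_expr V E ep eb L i p (\<lambda>l R ra rb. R / (l + R)) = eff_res V E ep eb L (ep i) (eb i) / L i"
  proof (cases "is_bridge V E ep eb i")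
    case True
    note b = bridge_edge[OF G i True p]
    show ?thesis unfolding edge_expr_def if_P[OF True] Lim_F1a Lim_F1b Lim_F2 Lim_F3 if_cancel b
      using l by (simp add: power2_eq_square)
  next
    case False
    note nb = nonbridge_edge[OF G i False p]
    define R where "R = R_del V E ep eb L i"
    have lR: "L i + R > 0" using nb(1) l unfolding R_def by linarith
    show ?thesis unfolding edge_expr_def if_not_P[OF False] nb(2) nb(3) R_def[symmetric]
      using alg1[OF l lR] alg2[OF l lR] alg3[OF l] by simp
  qed
  thus "edge_expr V E ep eb L i p (\<lambda>l R ra rb. l * (ra - rb)\<^sup>2 / (l + R)\<^sup>2)
      = (jvolt V E ep eb L p (ep i) (ep i) - jvolt V E ep eb L p (eb i) (eb i))\<^sup>2 / L i"
    and "edge_expr V E ep eb L i p (\<lambda>l R ra rb. l / (l + R)) = 1 - eff_res V E ep eb L (ep i) (eb i) / L i"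
    and "edge_expr V E ep eb L i p (\<lambda>l R ra rb. R / (l + R)) = eff_res V E ep eb L (ep i) (eb i) / L i"
    by auto
qed

lemma val_sum:
  assumes wf: "wfg V E ep eb L"
  shows "(\<Sum>q\<in>V. real (val E ep eb q) * d q) = (\<Sum>i\<in>E. d (ep i) + d (eb i))"
proof -
  have fV: "finite V" and fE: "finite E" and e: "\<forall>i\<in>E. ep i \<in> V" "\<forall>i\<in>E. eb i \<in> V"
    using wf unfolding wfg_def by auto
  have "(\<Sum>q\<in>V. real (val E ep eb q) * d q)
      = (\<Sum>q\<in>V. (\<Sum>i\<in>{i\<in>E. ep i = q}. d q) + (\<Sum>i\<in>{i\<in>E. eb i = q}. d q))"
    by (rule sum.cong) (auto simp: val_def algebra_simps)
  also have "\<dots> = (\<Sum>i\<in>E. d (ep i)) + (\<Sum>i\<in>E. d (eb i))"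
    unfolding sum.distrib group_ep[OF fV fE e(1), of "\<lambda>u i. d u"] group_ep[OF fV fE e(2), of "\<lambda>u i. d u"] ..
  finally show ?thesis by (simp add: sum.distrib)
qed



theorem lemma3p3:
  fixes V :: "'v set" and E :: "'e set" and ep eq :: "'e \<Rightarrow> 'v" and L :: "'e \<Rightarrow> real"
    and p :: 'v
  assumes "metrized_graph V E ep eq L"
    and "connected_graph V E ep eq"
    and "p \<in> V"
  shows "(\<Sum>i\<in>E. edge_expr V E ep eq L i p (\<lambda>l R ra rb. l * (ra - rb)\<^sup>2 / (l + R)\<^sup>2))
           = (\<Sum>i\<in>E. edge_expr V E ep eq L i p (\<lambda>l R ra rb. l / (l + R))
                  * (eff_res V E ep eq L (ep i) p + eff_res V E ep eq L (eq i) p))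
             - (\<Sum>q\<in>V. (real (val E ep eq q) - 2) * eff_res V E ep eq L p q)
       \<and> (\<Sum>i\<in>E. edge_expr V E ep eq L i p (\<lambda>l R ra rb. l / (l + R))
                  * (eff_res V E ep eq L (ep i) p + eff_res V E ep eq L (eq i) p))
             - (\<Sum>q\<in>V. (real (val E ep eq q) - 2) * eff_res V E ep eq L p q)
         = 2 * (\<Sum>q\<in>V. eff_res V E ep eq L p q)
           - (\<Sum>i\<in>E. edge_expr V E ep eq L i p (\<lambda>l R ra rb. R / (l + R))
                  * (eff_res V E ep eq L (ep i) p + eff_res V E ep eq L (eq i) p))"
proof -
  have G: "cg V E ep eq L" using assms(1,2) unfolding cg_def wfg_def metrized_graph_def by auto
  have wf: "wfg V E ep eq L" using G unfolding cg_def by simp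
  have p: "p \<in> V" by fact
  define d where "d u = jvolt V E ep eq L p u u" for u
  define X where "X i = d (ep i) + d (eq i)" for i
  define e1 where "e1 i = (d (ep i) - d (eq i))\<^sup>2 / L i" for i
  define e3 where "e3 i = eff_res V E ep eq L (ep i) (eq i) / L i" for i
  have Xe: "\<And>i. eff_res V E ep eq L (ep i) p + eff_res V E ep eq L (eq i) p = X i"
    unfolding X_def d_def eff_res_def ..
  have rp: "\<And>q. q \<in> V \<Longrightarrow> eff_res V E ep eq L p q = d q"
    unfolding d_def using eff_sym[OF G p] unfolding eff_res_def by simp
  have E1: "(\<Sum>i\<in>E. edge_expr V E ep eq L i p (\<lambda>l R ra rb. l * (ra - rb)\<^sup>2 / (l + R)\<^sup>2)) = (\<Sum>i\<in>E. e1 i)"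
    by (rule sum.cong) (auto simp: edge_vals(1)[OF G _ p] e1_def d_def)
  have E2: "(\<Sum>i\<in>E. edge_expr V E ep eq L i p (\<lambda>l R ra rb. l / (l + R))
                  * (eff_res V E ep eq L (ep i) p + eff_res V E ep eq L (eq i) p))
       = (\<Sum>i\<in>E. X i) - (\<Sum>i\<in>E. e3 i * X i)"
    unfolding Xe sum_subtractf[symmetric]
    by (rule sum.cong) (auto simp: edge_vals(2)[OF G _ p] e3_def algebra_simps)
  have E3: "(\<Sum>i\<in>E. edge_expr V E ep eq L i p (\<lambda>l R ra rb. R / (l + R))
                  * (eff_res V E ep eq L (ep i) p + eff_res V E ep eq L (eq i) p))
       = (\<Sum>i\<in>E. e3 i * X i)"
    unfolding Xe by (rule sum.cong) (auto simp: edge_vals(3)[OF G _ p] e3_def)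
  have B: "(\<Sum>q\<in>V. (real (val E ep eq q) - 2) * eff_res V E ep eq L p q)
      = (\<Sum>i\<in>E. X i) - 2 * (\<Sum>q\<in>V. d q)"
  proof -
    have "(\<Sum>q\<in>V. (real (val E ep eq q) - 2) * eff_res V E ep eq L p q)
        = (\<Sum>q\<in>V. real (val E ep eq q) * d q - 2 * d q)"
      by (rule sum.cong) (auto simp: rp algebra_simps)
    also have "\<dots> = (\<Sum>i\<in>E. X i) - 2 * (\<Sum>q\<in>V. d q)"
      unfolding sum_subtractf val_sum[OF wf] X_def sum_distrib_left ..
    finally show ?thesis .
  qed
  have S: "(\<Sum>q\<in>V. eff_res V E ep eq L p q) = (\<Sum>q\<in>V. d q)"
    by (rule sum.cong) (auto simp: rp)
  have A: "2 * (\<Sum>q\<in>V. d q) = (\<Sum>i\<in>E. e1 i) + (\<Sum>i\<in>E. e3 i * X i)"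
    using claimA[OF G p] unfolding d_def[symmetric] e1_def e3_def X_def sum.distrib .
  show ?thesis unfolding E1 E2 E3 B S using A by simp
qed


end
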